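(* Let $G$ be a finite graph, let $L=\{L_v\subset \mathbb{R}:v\in V(G)\}$ be an assignment of finite lists of real numbers to the vertices of $G$, and suppose that $f:V(G)\to \mathbb{Z}$ satisfies $f(v)<|L_v|$ for every $v\in V(G)$ and $\sum_{v\in V(G)} f(v)=|E(G)|-2$. If $G$ is not $L$-colorable, then for each color $c$, $$\sum_{\{u,v\}\subseteq V(G)} [x^{f+1_u+1_v}]\,P_G \cdot \chi_{L,c}(u)\chi_{L,c}(v) + \sum_{v\in V(G)} [x^{f+2\cdot 1_v}]\,P_G \cdot \chi_{L,c}(v)=0,$$ and for any distinct colors $c_1$ and $c_2$, $$\sum_{\{u,v\}\subseteq V(G)} [x^{f+1_u+1_v}]\,P_G \cdot (\chi_{L,c_1}(u)\chi_{L,c_2}(v)+\chi_{L,c_2}(u)\chi_{L,c_1}(v))+\sum_{v\in V(G)} [x^{f+2\cdot 1_v}]\,P_G \cdot \chi_{L,c_1}(v)\chi_{L,c_2}(v)=0,$$ where the sums over $\{u,v\}\subseteq V(G)$ range over unordered pairs of distinct vertices.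
   Context: An $L$-coloring of $G$ is a function $\varphi$ with $\varphi(v)\in L_v$ for all $v\in V(G)$ and $\varphi(u)\neq\varphi(v)$ for every edge $uv\in E(G)$; $G$ is $L$-colorable if an $L$-coloring exists. The graph polynomial $P_G$ is the polynomial in variables $x_v$ ($v\in V(G)$) defined by fixing an orientation $\vec G$ of $G$ and setting $P_G=\prod_{(u,v)\in E(\vec G)}(x_v-x_u)$; it is determined up to sign by $G$. For a function $g:V(G)\to\mathbb{Z}$ with nonnegative values, $x^g=\prod_{v\in V(G)}x_v^{g(v)}$, and $[x^g]\,q$ denotes the coefficient of the monomial $x^g$ in a polynomial $q$ (taken to be $0$ if $g$ has a negative value). For $z\in V(G)$, $1_z:V(G)\to\{0,1\}$ is the function with $1_z(z)=1$ and $1_z(u)=0$ for $u\neq z$. For a color $c$, the characteristic vector $\chi_{L,c}:V(G)\to\{0,1\}$ is defined by $\chi_{L,c}(v)=1$ if $c\in L_v$ and $\chi_{L,c}(v)=0$ otherwise. *)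

theory Defs
  imports Complex_Main "HOL-Library.Poly_Mapping"
begin

text \<open>Multivariate real polynomials in variables indexed by vertices:
  monomials are finitely supported exponent vectors (poly_mapping from vertices to nat).\<close>
type_synonym 'v mpoly = "('v \<Rightarrow>\<^sub>0 nat) \<Rightarrow>\<^sub>0 real"

definition mvar :: "'v \<Rightarrow> 'v mpoly" where
  "mvar v = Poly_Mapping.single (Poly_Mapping.single v 1) 1"

definition simple_graph :: "'v set \<Rightarrow> 'v set set \<Rightarrow> bool" where
  "simple_graph V E \<longleftrightarrow> finite V \<and> (\<forall>e\<in>E. e \<subseteq> V \<and> card e = 2)"

text \<open>Graph polynomial, using the orientation of each edge from its smaller to its
  larger endpoint (P_G is determined up to sign anyway).\<close>
definition graph_poly :: "'v::linorder set set \<Rightarrow> 'v mpoly" where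
  "graph_poly E = (\<Prod>e\<in>E. mvar (Max e) - mvar (Min e))"

text \<open>Coefficient of x^g for an integer-valued g on V; zero if g has a negative value.\<close>
definition coeff_at :: "'v set \<Rightarrow> 'v mpoly \<Rightarrow> ('v \<Rightarrow> int) \<Rightarrow> real" where
  "coeff_at V q g =
     (if \<exists>v\<in>V. g v < 0 then 0
      else Poly_Mapping.lookup q (\<Sum>v\<in>V. Poly_Mapping.single v (nat (g v))))"

definition ind1 :: "'v \<Rightarrow> 'v \<Rightarrow> int" where
  "ind1 z u = (if u = z then 1 else 0)"

definition chi :: "('v \<Rightarrow> real set) \<Rightarrow> real \<Rightarrow> 'v \<Rightarrow> real" where
  "chi L c v = (if c \<in> L v then 1 else 0)"

definition L_colorable :: "'v set \<Rightarrow> 'v set set \<Rightarrow> ('v \<Rightarrow> real set) \<Rightarrow> bool" where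
  "L_colorable V E L \<longleftrightarrow> (\<exists>\<phi>. (\<forall>v\<in>V. \<phi> v \<in> L v) \<and>
       (\<forall>u v. {u, v} \<in> E \<longrightarrow> \<phi> u \<noteq> \<phi> v))"

end

theory Submission
  imports Defs "HOL-Library.FuncSet"
begin

definition mmono :: "'v set \<Rightarrow> ('v \<Rightarrow> real) \<Rightarrow> ('v \<Rightarrow>\<^sub>0 nat) \<Rightarrow> real" where
  "mmono V a m = (\<Prod>v\<in>V. a v ^ Poly_Mapping.lookup m v)"

definition evp :: "'v set \<Rightarrow> ('v \<Rightarrow> real) \<Rightarrow> 'v mpoly \<Rightarrow> real" where
  "evp V a q = (\<Sum>m\<in>Poly_Mapping.keys q. Poly_Mapping.lookup q m * mmono V a m)"

lemma mmono_add: "mmono V a (m + m') = mmono V a m * mmono V a m'"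
  by (simp add: mmono_def lookup_add power_add prod.distrib)

lemma mmono_zero: "mmono V a 0 = 1"
  by (simp add: mmono_def)

lemma evp_add: "evp V a (p + q) = evp V a p + evp V a q"
  unfolding evp_def
  by (rule setsum_keys_plus_distrib[where f="\<lambda>k x. x * mmono V a k"]) (auto simp: distrib_right)

lemma evp_single: "evp V a (Poly_Mapping.single m c) = c * mmono V a m"
  by (simp add: evp_def)

lemma evp_zero: "evp V a 0 = 0"
  by (simp add: evp_def)

lemma evp_uminus: "evp V a (- p) = - evp V a p"
  by (simp add: evp_def sum_negf)

lemma evp_diff: "evp V a (p - q) = evp V a p - evp V a q"
  using evp_add[of V a p "- q"] by (simp add: evp_uminus)

lemma update_eq_add:
  assumes "k \<notin> Poly_Mapping.keys f"
  shows "Poly_Mapping.update k b f = f + Poly_Mapping.single k b"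
  using assms
  by (intro poly_mapping_eqI) (auto simp: lookup_update lookup_add lookup_single in_keys_iff when_def)

lemma evp_single_mult: "evp V a (Poly_Mapping.single k b * q) = b * mmono V a k * evp V a q"
proof (induction q rule: update_induct)
  case const
  then show ?case by (simp add: evp_zero)
next
  case (update k' b' g)
  then show ?case
    by (simp add: update_eq_add distrib_left evp_add mult_single evp_single mmono_add)
qed

lemma evp_mult: "evp V a (p * q) = evp V a p * evp V a q"
proof (induction p rule: update_induct)
  case const
  then show ?case by (simp add: evp_zero)
next
  case (update k b f)
  then show ?case
    by (simp add: update_eq_add distrib_right evp_add evp_single_mult evp_single)
qed

lemma evp_one: "evp V a 1 = 1"
  using evp_single[of V a 0 1] by (simp add: mmono_zero)

lemma evp_prod: "finite E \<Longrightarrow> evp V a (\<Prod>e\<in>E. F e) = (\<Prod>e\<in>E. evp V a (F e))"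
  by (induction E rule: finite_induct) (auto simp: evp_one evp_mult)

lemma mmono_var: assumes "finite V" "v \<in> V" shows "mmono V a (Poly_Mapping.single v 1) = a v"
proof -
  have "mmono V a (Poly_Mapping.single v 1) = (\<Prod>w\<in>V. if v = w then a w else 1)"
    unfolding mmono_def by (rule prod.cong) (auto simp: lookup_single when_def)
  also have "\<dots> = a v" using assms by simp
  finally show ?thesis .
qed

lemma evp_mvar: "finite V \<Longrightarrow> v \<in> V \<Longrightarrow> evp V a (mvar v) = a v"
  unfolding mvar_def evp_single using mmono_var[of V v a] by simp

definition homog :: "'v set \<Rightarrow> nat \<Rightarrow> 'v mpoly \<Rightarrow> bool" where
  "homog V d q \<longleftrightarrow> (\<forall>m\<in>Poly_Mapping.keys q. Poly_Mapping.keys m \<subseteq> V \<and> (\<Sum>v\<in>V. Poly_Mapping.lookup m v) = d)"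

lemma homog_mult: assumes "homog V d p" "homog V d' q" shows "homog V (d + d') (p * q)"
  unfolding homog_def
proof
  fix m assume "m \<in> Poly_Mapping.keys (p * q)"
  then obtain x y where m: "m = x + y" "x \<in> Poly_Mapping.keys p" "y \<in> Poly_Mapping.keys q"
    using keys_mult by blast
  show "Poly_Mapping.keys m \<subseteq> V \<and> (\<Sum>v\<in>V. Poly_Mapping.lookup m v) = d + d'"
  proof
    show "Poly_Mapping.keys m \<subseteq> V"
      using assms m keys_add[of x y] unfolding homog_def by blast
    show "(\<Sum>v\<in>V. Poly_Mapping.lookup m v) = d + d'"
      using assms m unfolding homog_def by (auto simp: lookup_add sum.distrib)
  qed
qed

lemma homog_one: "homog V 0 1"
  by (simp add: homog_def)

lemma homog_lin: assumes "finite V" "u \<in> V" "v \<in> V" shows "homog V 1 (mvar v - mvar u)"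
  unfolding homog_def
proof
  fix m assume "m \<in> Poly_Mapping.keys (mvar v - mvar u)"
  then have "m = Poly_Mapping.single v 1 \<or> m = Poly_Mapping.single u 1"
    using keys_diff[of "mvar v" "mvar u"] by (auto simp: mvar_def)
  moreover have "(\<Sum>w\<in>V. Poly_Mapping.lookup (Poly_Mapping.single x 1) w) = (1::nat)" if "x \<in> V" for x
  proof -
    have "(\<Sum>w\<in>V. Poly_Mapping.lookup (Poly_Mapping.single x 1) w) = (\<Sum>w\<in>V. if x = w then 1 else 0)"
      by (rule sum.cong) (auto simp: lookup_single when_def)
    then show ?thesis using assms that by (simp del: One_nat_def)
  qed
  ultimately show "Poly_Mapping.keys m \<subseteq> V \<and> (\<Sum>w\<in>V. Poly_Mapping.lookup m w) = 1"
    using assms by (auto simp del: One_nat_def)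
qed

lemma homog_graph_poly:
  assumes G: "simple_graph V E"
  shows "homog V (card E) (graph_poly E)"
proof -
  have fin: "finite E" using G unfolding simple_graph_def
    by (meson finite_Pow_iff finite_subset subsetI PowI)
  have "\<forall>E'\<subseteq>E. homog V (card E') (\<Prod>e\<in>E'. mvar (Max e) - mvar (Min e))"
  proof (intro allI impI)
    fix E' assume "E' \<subseteq> E"
    then have "finite E'" using fin finite_subset by blast
    then show "homog V (card E') (\<Prod>e\<in>E'. mvar (Max e) - mvar (Min e))"
      using \<open>E' \<subseteq> E\<close>
    proof (induction E' rule: finite_induct)
      case empty then show ?case by (simp add: homog_one)
    next
      case (insert e F)
      have e: "e \<subseteq> V" "card e = 2" using insert G unfolding simple_graph_def by auto
      have "finite e" "e \<noteq> {}" using e by (auto intro: card_ge_0_finite)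
      then have "Max e \<in> V" "Min e \<in> V" using e Max_in Min_in by blast+
      then have "homog V 1 (mvar (Max e) - mvar (Min e))"
        using G by (intro homog_lin) (auto simp: simple_graph_def)
      moreover have "homog V (card F) (\<Prod>e\<in>F. mvar (Max e) - mvar (Min e))"
        using insert by blast
      ultimately have "homog V (1 + card F) ((mvar (Max e) - mvar (Min e)) * (\<Prod>e\<in>F. mvar (Max e) - mvar (Min e)))"
        by (rule homog_mult)
      then show ?case using insert by simp
    qed
  qed
  then show ?thesis unfolding graph_poly_def by blast
qed

definition Wt :: "real set \<Rightarrow> real \<Rightarrow> real" where
  "Wt A x = inverse (\<Prod>y\<in>A - {x}. x - y)"

definition phi :: "real set \<Rightarrow> nat \<Rightarrow> real" where
  "phi A k = (\<Sum>x\<in>A. x ^ k * Wt A x)"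

definition h2 :: "real set \<Rightarrow> real" where
  "h2 A = ((\<Sum>A) ^ 2 + (\<Sum>x\<in>A. x ^ 2)) / 2"

lemma Wt_remove:
  assumes "finite A" "c \<in> A" "x \<in> A" "x \<noteq> c"
  shows "Wt A x * (x - c) = Wt (A - {c}) x"
proof -
  have "(\<Prod>y\<in>A - {x}. x - y) = (x - c) * (\<Prod>y\<in>A - {x} - {c}. x - y)"
    using assms by (intro prod.remove) auto
  moreover have "A - {x} - {c} = A - {c} - {x}" by auto
  ultimately have P: "(\<Prod>y\<in>A - {x}. x - y) = (x - c) * (\<Prod>y\<in>A - {c} - {x}. x - y)" by simp
  have "x - c \<noteq> 0" using assms by simp
  then show ?thesis unfolding Wt_def P by (simp add: inverse_mult_distrib)
qed

lemma phi_remove: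
  assumes "finite A" "c \<in> A"
  shows "phi (A - {c}) k = phi A (Suc k) - c * phi A k"
proof -
  have "phi A (Suc k) - c * phi A k = (\<Sum>x\<in>A. x ^ k * (Wt A x * (x - c)))"
    unfolding phi_def by (simp add: sum_distrib_left sum_subtractf[symmetric] algebra_simps)
  also have "\<dots> = (\<Sum>x\<in>A - {c}. x ^ k * (Wt A x * (x - c)))"
    using assms by (intro sum.mono_neutral_right) auto
  also have "\<dots> = (\<Sum>x\<in>A - {c}. x ^ k * Wt (A - {c}) x)"
    using assms by (intro sum.cong) (auto simp: Wt_remove)
  finally show ?thesis unfolding phi_def by simp
qed

lemma phi_vals:
  "\<forall>A. finite A \<longrightarrow> card A = n \<longrightarrow>
     (\<forall>k. k + 2 \<le> n \<longrightarrow> phi A k = 0) \<and> (n \<ge> 1 \<longrightarrow> phi A (n - 1) = 1)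
     \<and> phi A n = \<Sum>A \<and> phi A (Suc n) = h2 A"
proof (induction n)
  case 0
  then show ?case by (auto simp: phi_def h2_def)
next
  case (Suc n)
  show ?case
  proof (intro allI impI)
    fix A :: "real set" assume fA: "finite A" and cA: "card A = Suc n"
    then obtain b where b: "b \<in> A" by (metis card.empty equals0I nat.distinct(1))
    define B where "B = A - {b}"
    have fB: "finite B" and cB: "card B = n" using fA cA b by (auto simp: B_def)
    have IHB: "(\<forall>k. k + 2 \<le> n \<longrightarrow> phi B k = 0) \<and> (n \<ge> 1 \<longrightarrow> phi B (n - 1) = 1)
     \<and> phi B n = \<Sum>B \<and> phi B (Suc n) = h2 B" using Suc fB cB by blast
    have rec: "phi A (Suc k) = b * phi A k + phi B k" for k
      using phi_remove[OF fA b, of k] by (simp add: B_def)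
    have A_eq: "A = insert b B" "b \<notin> B" using b by (auto simp: B_def)
    have phi0: "phi A 0 = (if n = 0 then 1 else 0)"
    proof (cases "n = 0")
      case True
      then have "A = {b}" using cB fB A_eq by simp
      then show ?thesis using True by (simp add: phi_def Wt_def)
    next
      case False
      then obtain c where c: "c \<in> B" using cB by (metis card.empty equals0I)
      have cA': "c \<in> A" "c \<noteq> b" using c A_eq by auto
      have fC: "finite (A - {c})" and cC: "card (A - {c}) = n" using fA cA cA' by auto
      have IHC: "(\<forall>k. k + 2 \<le> n \<longrightarrow> phi (A - {c}) k = 0) \<and> (n \<ge> 1 \<longrightarrow> phi (A - {c}) (n - 1) = 1)"
        using Suc fC cC by blast
      have eqC: "phi (A - {c}) 0 = phi B 0"
      proof (cases "n = 1")
        case True then show ?thesis using IHC IHB by simp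
      next
        case False then have "0 + 2 \<le> n" using \<open>n \<noteq> 0\<close> by simp
        then show ?thesis using IHC IHB by simp
      qed
      have "phi (A - {c}) 0 = phi A 1 - c * phi A 0" using phi_remove[OF fA cA'(1), of 0] by simp
      moreover have "phi B 0 = phi A 1 - b * phi A 0" using phi_remove[OF fA b, of 0] by (simp add: B_def)
      moreover have "(b - c) * phi A 0 = b * phi A 0 - c * phi A 0" by (simp add: left_diff_distrib)
      ultimately have "(b - c) * phi A 0 = 0" using eqC by linarith
      then have "phi A 0 = 0" using cA'(2) by simp
      then show ?thesis using False by simp
    qed
    have low: "\<forall>k. k + 2 \<le> Suc n \<longrightarrow> phi A k = 0"
    proof
      fix k show "k + 2 \<le> Suc n \<longrightarrow> phi A k = 0"
      proof (induction k)
        case 0 then show ?case using phi0 by simp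
      next
        case (Suc k) then show ?case using rec[of k] IHB by simp
      qed
    qed
    have top: "phi A n = 1"
    proof (cases n)
      case 0 then show ?thesis using phi0 by simp
    next
      case (Suc n')
      then have "phi A n' = 0" using low by simp
      moreover have "phi B n' = 1" using IHB Suc by simp
      ultimately show ?thesis using rec[of n'] Suc by simp
    qed
    have s1: "phi A (Suc n) = \<Sum>A" using rec[of n] top IHB A_eq fB by simp
    have s2: "phi A (Suc (Suc n)) = h2 A"
    proof -
      have "phi A (Suc (Suc n)) = b * (b + \<Sum>B) + h2 B" using rec[of "Suc n"] s1 IHB A_eq fB by simp
      also have "\<dots> = h2 A" using A_eq fB by (simp add: h2_def power2_eq_square algebra_simps)
      finally show ?thesis .
    qed
    show "(\<forall>k. k + 2 \<le> Suc n \<longrightarrow> phi A k = 0) \<and> (Suc n \<ge> 1 \<longrightarrow> phi A (Suc n - 1) = 1)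
     \<and> phi A (Suc n) = \<Sum>A \<and> phi A (Suc (Suc n)) = h2 A"
      using low top s1 s2 by simp
  qed
qed

lemma coef_lemma:
  fixes P :: "'v mpoly"
  assumes fV: "finite V" and keysV: "\<forall>m\<in>Poly_Mapping.keys P. Poly_Mapping.keys m \<subseteq> V"
  shows "(\<Sum>m\<in>Poly_Mapping.keys P. if (\<forall>w\<in>V. int (Poly_Mapping.lookup m w) = g w) then Poly_Mapping.lookup P m else 0)
         = coeff_at V P g"
proof (cases "\<exists>v\<in>V. g v < 0")
  case True
  then have nm: "\<not> (\<forall>w\<in>V. int (Poly_Mapping.lookup m w) = g w)" for m by force
  have "(\<Sum>m\<in>Poly_Mapping.keys P. if (\<forall>w\<in>V. int (Poly_Mapping.lookup m w) = g w) then Poly_Mapping.lookup P m else 0) = 0"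
    by (rule sum.neutral) (simp add: nm)
  then show ?thesis using True by (simp add: coeff_at_def)
next
  case False
  define m0 where "m0 = (\<Sum>v\<in>V. Poly_Mapping.single v (nat (g v)))"
  have lm0: "Poly_Mapping.lookup m0 w = (if w \<in> V then nat (g w) else 0)" for w
  proof -
    have "Poly_Mapping.lookup m0 w = (\<Sum>v\<in>V. if v = w then nat (g v) else 0)"
      unfolding m0_def lookup_sum by (rule sum.cong) (auto simp: lookup_single when_def)
    also have "\<dots> = (if w \<in> V then nat (g w) else 0)" using fV by simp
    finally show ?thesis .
  qed
  have iff: "(\<forall>w\<in>V. int (Poly_Mapping.lookup m w) = g w) \<longleftrightarrow> m = m0" if "m \<in> Poly_Mapping.keys P" for m
  proof
    assume H: "\<forall>w\<in>V. int (Poly_Mapping.lookup m w) = g w"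
    show "m = m0"
    proof (rule poly_mapping_eqI)
      fix w show "Poly_Mapping.lookup m w = Poly_Mapping.lookup m0 w"
      proof (cases "w \<in> V")
        case True then show ?thesis using H lm0 by (metis nat_int)
      next
        case False
        then have "w \<notin> Poly_Mapping.keys m" using keysV that by blast
        then show ?thesis using False lm0 by (simp add: in_keys_iff)
      qed
    qed
  next
    assume "m = m0"
    then show "\<forall>w\<in>V. int (Poly_Mapping.lookup m w) = g w" using lm0 False by auto
  qed
  have "(\<Sum>m\<in>Poly_Mapping.keys P. if (\<forall>w\<in>V. int (Poly_Mapping.lookup m w) = g w) then Poly_Mapping.lookup P m else 0)
      = (\<Sum>m\<in>Poly_Mapping.keys P. if m0 = m then Poly_Mapping.lookup P m else 0)"
    by (rule sum.cong) (auto simp: iff)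
  also have "\<dots> = Poly_Mapping.lookup P m0" by (simp add: in_keys_iff)
  finally show ?thesis using False by (simp add: coeff_at_def m0_def)
qed

lemma comb_lemma:
  fixes V :: "'v::linorder set" and s :: "'v \<Rightarrow> int" and F :: "'v \<Rightarrow> int \<Rightarrow> real"
  assumes fV: "finite V" and ssum: "(\<Sum>v\<in>V. s v) = 2"
    and Fneg: "\<forall>v\<in>V. \<forall>j<0. F v j = 0" and F1: "\<forall>v\<in>V. F v 1 = S v" and F2: "\<forall>v\<in>V. F v 2 = H v"
    and F0: "\<forall>v\<in>V. F v 0 = 1 \<or> s v \<ge> 1"
  shows "(\<Prod>v\<in>V. F v (s v)) =
    (\<Sum>(u, v)\<in>{(u, v). u \<in> V \<and> v \<in> V \<and> u < v}. if (\<forall>w\<in>V. s w = ind1 u w + ind1 v w) then S u * S v else 0)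
    + (\<Sum>v\<in>V. if (\<forall>w\<in>V. s w = 2 * ind1 v w) then H v else 0)"
proof (cases "\<exists>z\<in>V. s z < 0")
  case True
  then obtain z where z: "z \<in> V" "s z < 0" by blast
  have "(\<Prod>v\<in>V. F v (s v)) = 0" using z Fneg fV by (auto simp: prod_zero_iff)
  moreover have "(\<Sum>(u, v)\<in>{(u, v). u \<in> V \<and> v \<in> V \<and> u < v}. if (\<forall>w\<in>V. s w = ind1 u w + ind1 v w) then S u * S v else 0) = 0"
    using z by (intro sum.neutral) (force simp: ind1_def)
  moreover have "(\<Sum>v\<in>V. if (\<forall>w\<in>V. s w = 2 * ind1 v w) then H v else 0) = 0"
    using z by (intro sum.neutral) (force simp: ind1_def)
  ultimately show ?thesis by simp
next
  case False
  then have nn: "\<forall>v\<in>V. s v \<ge> 0" by auto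
  have F0': "F w 0 = 1" if "w \<in> V" "s w = 0" for w using F0 that by auto
  obtain u where u: "u \<in> V" "s u > 0"
  proof -
    have "\<exists>u\<in>V. s u \<noteq> 0" using ssum by (metis sum.neutral zero_neq_numeral)
    then show ?thesis using that nn by force
  qed
  have sumu: "(\<Sum>v\<in>V. s v) = s u + (\<Sum>v\<in>V - {u}. s v)" using u fV by (simp add: sum.remove)
  have nnr: "(\<Sum>v\<in>V - {u}. s v) \<ge> 0" using nn by (intro sum_nonneg) auto
  have P2fin: "finite {(u, v). u \<in> V \<and> v \<in> V \<and> u < v}"
    by (rule finite_subset[of _ "V \<times> V"]) (use fV in auto)
  show ?thesis
  proof (cases "s u \<ge> 2")
    case True
    then have su: "s u = 2" and r0: "(\<Sum>v\<in>V - {u}. s v) = 0" using sumu ssum nnr by linarith+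
    have rest: "\<forall>w\<in>V - {u}. s w = 0" using r0 nn fV sum_nonneg_eq_0_iff[of "V - {u}" s] by auto
    have sform: "s w = 2 * ind1 u w" if "w \<in> V" for w using rest su that by (auto simp: ind1_def)
    have "(\<Prod>v\<in>V. F v (s v)) = F u (s u) * (\<Prod>v\<in>V - {u}. F v (s v))" using u fV by (simp add: prod.remove)
    also have "(\<Prod>v\<in>V - {u}. F v (s v)) = 1" using rest F0' by (intro prod.neutral) auto
    finally have L: "(\<Prod>v\<in>V. F v (s v)) = H u" using su F2 u by simp
    have R1: "(\<Sum>(x, y)\<in>{(u, v). u \<in> V \<and> v \<in> V \<and> u < v}. if (\<forall>w\<in>V. s w = ind1 x w + ind1 y w) then S x * S y else 0) = 0"
    proof (intro sum.neutral ballI)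
      fix p assume "p \<in> {(u, v). u \<in> V \<and> v \<in> V \<and> u < v}"
      then obtain x y where p: "p = (x, y)" "x < y" by auto
      have "\<not> (s u = ind1 x u + ind1 y u)" using su p(2) by (auto simp: ind1_def)
      then show "(case p of (x, y) \<Rightarrow> if (\<forall>w\<in>V. s w = ind1 x w + ind1 y w) then S x * S y else 0) = 0"
        using p u by auto
    qed
    have "(\<Sum>v\<in>V. if (\<forall>w\<in>V. s w = 2 * ind1 v w) then H v else 0) = (\<Sum>v\<in>V. if u = v then H v else 0)"
    proof (rule sum.cong)
      fix v assume v: "v \<in> V"
      have "(\<forall>w\<in>V. s w = 2 * ind1 v w) \<longleftrightarrow> u = v"
      proof
        assume "\<forall>w\<in>V. s w = 2 * ind1 v w"
        then have "s u = 2 * ind1 v u" using u by blast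
        then show "u = v" using su by (auto simp: ind1_def split: if_splits)
      next
        assume "u = v" then show "\<forall>w\<in>V. s w = 2 * ind1 v w" using sform by blast
      qed
      then show "(if (\<forall>w\<in>V. s w = 2 * ind1 v w) then H v else 0) = (if u = v then H v else 0)" by simp
    qed simp
    also have "\<dots> = H u" using u fV by simp
    finally show ?thesis using L R1 by simp
  next
    case False
    then have su: "s u = 1" and r1: "(\<Sum>v\<in>V - {u}. s v) = 1" using u sumu ssum by linarith+
    obtain u2 where u2: "u2 \<in> V - {u}" "s u2 > 0"
    proof -
      have "\<exists>x\<in>V - {u}. s x \<noteq> 0" using r1 by (metis sum.neutral zero_neq_one)
      then show ?thesis using that nn by force
    qed
    have sumu2: "(\<Sum>v\<in>V - {u}. s v) = s u2 + (\<Sum>v\<in>V - {u} - {u2}. s v)" using u2 fV by (simp add: sum.remove)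
    have nnr2: "(\<Sum>v\<in>V - {u} - {u2}. s v) \<ge> 0" using nn by (intro sum_nonneg) auto
    have su2: "s u2 = 1" and r0: "(\<Sum>v\<in>V - {u} - {u2}. s v) = 0" using sumu2 r1 nnr2 u2 by linarith+
    have rest: "\<forall>w\<in>V - {u} - {u2}. s w = 0" using r0 nn fV sum_nonneg_eq_0_iff[of "V - {u} - {u2}" s] by auto
    have uu2: "u \<noteq> u2" "u2 \<in> V" using u2 by auto
    have sform: "s w = ind1 u w + ind1 u2 w" if "w \<in> V" for w
      using rest su su2 that uu2 by (auto simp: ind1_def)
    have "(\<Prod>v\<in>V. F v (s v)) = F u (s u) * (\<Prod>v\<in>V - {u}. F v (s v))" using u fV by (simp add: prod.remove)
    also have "(\<Prod>v\<in>V - {u}. F v (s v)) = F u2 (s u2) * (\<Prod>v\<in>V - {u} - {u2}. F v (s v))"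
      using u2 fV by (simp add: prod.remove)
    also have "(\<Prod>v\<in>V - {u} - {u2}. F v (s v)) = 1" using rest F0' by (intro prod.neutral) auto
    finally have L: "(\<Prod>v\<in>V. F v (s v)) = S u * S u2" using su su2 F1 u uu2 by simp
    define p0 where "p0 = (min u u2, max u u2)"
    have p0in: "p0 \<in> {(u, v). u \<in> V \<and> v \<in> V \<and> u < v}"
      using u uu2 by (auto simp: p0_def min_def max_def)
    have "(\<Sum>p\<in>{(u, v). u \<in> V \<and> v \<in> V \<and> u < v}. (case p of (x, y) \<Rightarrow> if (\<forall>w\<in>V. s w = ind1 x w + ind1 y w) then S x * S y else 0))
        = (\<Sum>p\<in>{(u, v). u \<in> V \<and> v \<in> V \<and> u < v}. if p0 = p then S u * S u2 else 0)"
    proof (rule sum.cong)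
      fix p assume "p \<in> {(u, v). u \<in> V \<and> v \<in> V \<and> u < v}"
      then obtain x y where p: "p = (x, y)" "x < y" "x \<in> V" "y \<in> V" by auto
      have "(\<forall>w\<in>V. s w = ind1 x w + ind1 y w) \<longleftrightarrow> p0 = p"
      proof
        assume H: "\<forall>w\<in>V. s w = ind1 x w + ind1 y w"
        have "s u = ind1 x u + ind1 y u" "s u2 = ind1 x u2 + ind1 y u2" using H u uu2 by auto
        then have "u \<in> {x, y}" "u2 \<in> {x, y}" using su su2 by (auto simp: ind1_def split: if_splits)
        then show "p0 = p" using uu2 p by (auto simp: p0_def min_def max_def)
      next
        assume "p0 = p"
        then have "{x, y} = {u, u2}" using p by (auto simp: p0_def min_def max_def split: if_splits)
        then show "\<forall>w\<in>V. s w = ind1 x w + ind1 y w" using sform p uu2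
          by (auto simp: ind1_def doubleton_eq_iff)
      qed
      moreover have "p0 = p \<Longrightarrow> S x * S y = S u * S u2"
        using p by (auto simp: p0_def min_def max_def split: if_splits)
      ultimately show "(case p of (x, y) \<Rightarrow> if (\<forall>w\<in>V. s w = ind1 x w + ind1 y w) then S x * S y else 0)
          = (if p0 = p then S u * S u2 else 0)" using p by auto
    qed simp
    also have "\<dots> = S u * S u2" using p0in P2fin by simp
    finally have R1: "(\<Sum>(x, y)\<in>{(u, v). u \<in> V \<and> v \<in> V \<and> u < v}. if (\<forall>w\<in>V. s w = ind1 x w + ind1 y w) then S x * S y else 0) = S u * S u2" .
    have R2: "(\<Sum>v\<in>V. if (\<forall>w\<in>V. s w = 2 * ind1 v w) then H v else 0) = 0"
    proof (intro sum.neutral ballI)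
      fix v assume v: "v \<in> V"
      have "s v \<le> 1" using sform[OF v] uu2 by (auto simp: ind1_def)
      then have "\<not> (s v = 2 * ind1 v v)" by (simp add: ind1_def)
      then show "(if (\<forall>w\<in>V. s w = 2 * ind1 v w) then H v else 0) = 0" using v by auto
    qed
    show ?thesis using L R1 R2 by simp
  qed
qed

lemma evp_graph_poly:
  assumes G: "simple_graph V E"
  shows "evp V a (graph_poly E) = (\<Prod>e\<in>E. a (Max e) - a (Min e))"
proof -
  have fV: "finite V" using G by (simp add: simple_graph_def)
  have fE: "finite E" using G unfolding simple_graph_def
    by (meson finite_Pow_iff finite_subset subsetI PowI)
  have "evp V a (graph_poly E) = (\<Prod>e\<in>E. evp V a (mvar (Max e) - mvar (Min e)))"
    unfolding graph_poly_def using fE by (rule evp_prod)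
  also have "\<dots> = (\<Prod>e\<in>E. a (Max e) - a (Min e))"
  proof (rule prod.cong)
    fix e assume "e \<in> E"
    then have e: "e \<subseteq> V" "card e = 2" using G by (auto simp: simple_graph_def)
    have "finite e" "e \<noteq> {}" using e by (auto intro: card_ge_0_finite)
    then have "Max e \<in> V" "Min e \<in> V" using e Max_in Min_in by blast+
    then show "evp V a (mvar (Max e) - mvar (Min e)) = a (Max e) - a (Min e)"
      using fV by (simp add: evp_diff evp_mvar)
  qed simp
  finally show ?thesis .
qed

lemma evp_zero_grid:
  assumes G: "simple_graph V E" and notcol: "\<not> L_colorable V E L" and a: "a \<in> PiE V L"
  shows "evp V a (graph_poly E) = 0"
proof -
  have fE: "finite E" using G unfolding simple_graph_def
    by (meson finite_Pow_iff finite_subset subsetI PowI)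
  have "\<forall>v\<in>V. a v \<in> L v" using a by auto
  then obtain u v where uv: "{u, v} \<in> E" "a u = a v" using notcol unfolding L_colorable_def by blast
  have "a (Max {u, v}) - a (Min {u, v}) = 0" using uv(2) by (cases "u \<le> v") (auto simp: max_def min_def)
  then have "(\<Prod>e\<in>E. a (Max e) - a (Min e)) = 0" using uv(1) fE
    by (subst prod_zero_iff) (auto simp del: Max_insert Min_insert)
  then show ?thesis using evp_graph_poly[OF G] by simp
qed

lemma main_identity:
  fixes V :: "'v::linorder set" and E :: "'v set set"
    and L :: "'v \<Rightarrow> real set" and f :: "'v \<Rightarrow> int"
  assumes G: "simple_graph V E"
    and Lfin: "\<forall>v\<in>V. finite (L v)"
    and f_lt: "\<forall>v\<in>V. f v < int (card (L v))"
    and f_sum: "(\<Sum>v\<in>V. f v) = int (card E) - 2"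
    and notcol: "\<not> L_colorable V E L"
  shows "(\<Sum>(u, v)\<in>{(u, v). u \<in> V \<and> v \<in> V \<and> u < v}.
              coeff_at V (graph_poly E) (\<lambda>w. f w + ind1 u w + ind1 v w) * (\<Sum>(L u) * \<Sum>(L v)))
          + (\<Sum>v\<in>V. coeff_at V (graph_poly E) (\<lambda>w. f w + 2 * ind1 v w) * h2 (L v)) = 0"
proof -
  define P where "P = graph_poly E"
  define P2 where "P2 = {(u, v). u \<in> V \<and> v \<in> V \<and> u < v}"
  have fV: "finite V" using G by (simp add: simple_graph_def)
  have P2fin: "finite P2" unfolding P2_def
    by (rule finite_subset[of _ "V \<times> V"]) (use fV in auto)
  have hom: "homog V (card E) P" unfolding P_def by (rule homog_graph_poly[OF G])
  define e where "e v = nat (int (card (L v)) - 1 - f v)" for v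
  define Lam where "Lam a = (\<Prod>v\<in>V. a v ^ e v * Wt (L v) (a v))" for a
  define g where "g m p = (case p of (u, v) \<Rightarrow> if (\<forall>w\<in>V. int (Poly_Mapping.lookup m w) = f w + ind1 u w + ind1 v w) then \<Sum>(L u) * \<Sum>(L v) else 0)" for m p
  define k where "k m v = (if (\<forall>w\<in>V. int (Poly_Mapping.lookup m w) = f w + 2 * ind1 v w) then h2 (L v) else 0)" for m v
  have step1: "(\<Sum>a\<in>PiE V L. evp V a P * Lam a) = 0"
    by (rule sum.neutral) (use evp_zero_grid[OF G notcol] in \<open>auto simp: P_def\<close>)
  have step2: "(\<Sum>a\<in>PiE V L. evp V a P * Lam a)
      = (\<Sum>m\<in>Poly_Mapping.keys P. Poly_Mapping.lookup P m * (\<Prod>v\<in>V. phi (L v) (Poly_Mapping.lookup m v + e v)))"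
  proof -
    have "evp V a P * Lam a = (\<Sum>m\<in>Poly_Mapping.keys P. Poly_Mapping.lookup P m *
              (\<Prod>v\<in>V. a v ^ (Poly_Mapping.lookup m v + e v) * Wt (L v) (a v)))" for a
    proof -
      have "mmono V a m * Lam a = (\<Prod>v\<in>V. a v ^ (Poly_Mapping.lookup m v + e v) * Wt (L v) (a v))" for m
        unfolding mmono_def Lam_def prod.distrib[symmetric] by (rule prod.cong) (simp_all add: power_add mult.assoc)
      then show ?thesis unfolding evp_def sum_distrib_right by (simp add: mult.assoc)
    qed
    then have "(\<Sum>a\<in>PiE V L. evp V a P * Lam a) = (\<Sum>a\<in>PiE V L. \<Sum>m\<in>Poly_Mapping.keys P. Poly_Mapping.lookup P m *
              (\<Prod>v\<in>V. a v ^ (Poly_Mapping.lookup m v + e v) * Wt (L v) (a v)))" by simp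
    also have "\<dots> = (\<Sum>m\<in>Poly_Mapping.keys P. \<Sum>a\<in>PiE V L. Poly_Mapping.lookup P m *
              (\<Prod>v\<in>V. a v ^ (Poly_Mapping.lookup m v + e v) * Wt (L v) (a v)))" by (rule sum.swap)
    also have "\<dots> = (\<Sum>m\<in>Poly_Mapping.keys P. Poly_Mapping.lookup P m * (\<Prod>v\<in>V. phi (L v) (Poly_Mapping.lookup m v + e v)))"
    proof (rule sum.cong)
      fix m
      have "(\<Prod>v\<in>V. phi (L v) (Poly_Mapping.lookup m v + e v))
          = (\<Sum>a\<in>PiE V L. \<Prod>v\<in>V. a v ^ (Poly_Mapping.lookup m v + e v) * Wt (L v) (a v))"
        unfolding phi_def
        using prod_sum_PiE[where A=V and B=L and f="\<lambda>v x. x ^ (Poly_Mapping.lookup m v + e v) * Wt (L v) x"] fV Lfin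
        by simp
      then show "(\<Sum>a\<in>PiE V L. Poly_Mapping.lookup P m *
              (\<Prod>v\<in>V. a v ^ (Poly_Mapping.lookup m v + e v) * Wt (L v) (a v)))
          = Poly_Mapping.lookup P m * (\<Prod>v\<in>V. phi (L v) (Poly_Mapping.lookup m v + e v))"
        by (simp add: sum_distrib_left)
    qed simp
    finally show ?thesis .
  qed
  have step3: "(\<Prod>v\<in>V. phi (L v) (Poly_Mapping.lookup m v + e v)) = (\<Sum>p\<in>P2. g m p) + (\<Sum>v\<in>V. k m v)"
    if m: "m \<in> Poly_Mapping.keys P" for m
  proof -
    define s where "s w = int (Poly_Mapping.lookup m w) - f w" for w
    define F where "F v j = (if j < 0 then 0 else phi (L v) (nat (int (card (L v)) - 1 + j)))" for v j
    have degm: "(\<Sum>v\<in>V. Poly_Mapping.lookup m v) = card E" using hom m by (simp add: homog_def)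
    have ssum: "(\<Sum>v\<in>V. s v) = 2"
    proof -
      have "(\<Sum>v\<in>V. s v) = (\<Sum>v\<in>V. int (Poly_Mapping.lookup m v)) - (\<Sum>v\<in>V. f v)"
        unfolding s_def by (simp add: sum_subtractf)
      also have "(\<Sum>v\<in>V. int (Poly_Mapping.lookup m v)) = int (card E)" using degm by (metis of_nat_sum)
      finally show ?thesis using f_sum by simp
    qed
    have PV: "\<forall>v\<in>V. phi (L v) (card (L v) - 1) = 1 \<or> card (L v) = 0"
      and P1: "\<forall>v\<in>V. phi (L v) (card (L v)) = \<Sum>(L v)"
      and P2': "\<forall>v\<in>V. phi (L v) (Suc (card (L v))) = h2 (L v)"
      and Plow: "\<forall>v\<in>V. \<forall>j. j + 2 \<le> card (L v) \<longrightarrow> phi (L v) j = 0"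
      using phi_vals Lfin by (metis One_nat_def Suc_leI neq0_conv)+
    have eqF: "phi (L v) (Poly_Mapping.lookup m v + e v) = F v (s v)" if v: "v \<in> V" for v
    proof -
      have hv: "f v < int (card (L v))" using f_lt v by blast
      have ie: "int (e v) = int (card (L v)) - 1 - f v" using hv by (simp add: e_def)
      show ?thesis
    proof (cases "s v < 0")
      case True
      have "int (Poly_Mapping.lookup m v + e v + 2) \<le> int (card (L v))"
        using ie True unfolding s_def by simp
      then have "Poly_Mapping.lookup m v + e v + 2 \<le> card (L v)" by (simp only: of_nat_le_iff)
      then show ?thesis using Plow v True by (simp add: F_def)
    next
      case False
      have "int (Poly_Mapping.lookup m v + e v) = int (card (L v)) - 1 + s v"
        using ie unfolding s_def by simp
      then have "Poly_Mapping.lookup m v + e v = nat (int (card (L v)) - 1 + s v)" by (metis nat_int)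
      then show ?thesis using False by (simp add: F_def)
    qed
    qed
    have "(\<Prod>v\<in>V. phi (L v) (Poly_Mapping.lookup m v + e v)) = (\<Prod>v\<in>V. F v (s v))"
      using eqF by (rule prod.cong[OF refl])
    also have "\<dots> = (\<Sum>(u, v)\<in>{(u, v). u \<in> V \<and> v \<in> V \<and> u < v}. if (\<forall>w\<in>V. s w = ind1 u w + ind1 v w) then \<Sum>(L u) * \<Sum>(L v) else 0)
    + (\<Sum>v\<in>V. if (\<forall>w\<in>V. s w = 2 * ind1 v w) then h2 (L v) else 0)"
    proof (rule comb_lemma[OF fV ssum])
      show "\<forall>v\<in>V. \<forall>j<0. F v j = 0" by (simp add: F_def)
      show "\<forall>v\<in>V. F v 1 = \<Sum>(L v)" using P1 by (simp add: F_def)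
      show "\<forall>v\<in>V. F v 2 = h2 (L v)"
      proof
        fix v assume "v \<in> V"
        then have "nat (int (card (L v)) - 1 + 2) = Suc (card (L v))" by simp
        then show "F v 2 = h2 (L v)" using P2' \<open>v \<in> V\<close> by (simp add: F_def)
      qed
      show "\<forall>v\<in>V. F v 0 = 1 \<or> s v \<ge> 1"
      proof
        fix v assume v: "v \<in> V"
        show "F v 0 = 1 \<or> s v \<ge> 1"
        proof (cases "card (L v) = 0")
          case True then show ?thesis using f_lt v unfolding s_def by auto
        next
          case False
          then have "nat (int (card (L v)) - 1 + 0) = card (L v) - 1" by simp
          moreover have "phi (L v) (card (L v) - 1) = 1" using PV v False by metis
          ultimately show ?thesis by (simp add: F_def)
        qed
      qed
    qed
    also have "\<dots> = (\<Sum>p\<in>P2. g m p) + (\<Sum>v\<in>V. k m v)"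
    proof -
      have c: "(\<forall>w\<in>V. s w = h w) \<longleftrightarrow> (\<forall>w\<in>V. int (Poly_Mapping.lookup m w) = f w + h w)" for h
        unfolding s_def by auto
      have 1: "(\<Sum>(u, v)\<in>{(u, v). u \<in> V \<and> v \<in> V \<and> u < v}. if (\<forall>w\<in>V. s w = ind1 u w + ind1 v w) then \<Sum>(L u) * \<Sum>(L v) else 0)
          = (\<Sum>p\<in>P2. g m p)"
        unfolding P2_def g_def
        by (rule sum.cong) (auto simp: c[of "\<lambda>w. ind1 _ w + ind1 _ w", simplified] add.assoc)
      have 2: "(\<Sum>v\<in>V. if (\<forall>w\<in>V. s w = 2 * ind1 v w) then h2 (L v) else 0) = (\<Sum>v\<in>V. k m v)"
        unfolding k_def by (rule sum.cong) (auto simp: c[of "\<lambda>w. 2 * ind1 _ w", simplified])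
      show ?thesis using 1 2 by simp
    qed
    finally show ?thesis .
  qed
  have keysV: "\<forall>m\<in>Poly_Mapping.keys P. Poly_Mapping.keys m \<subseteq> V" using hom by (simp add: homog_def)
  have "0 = (\<Sum>m\<in>Poly_Mapping.keys P. Poly_Mapping.lookup P m * ((\<Sum>p\<in>P2. g m p) + (\<Sum>v\<in>V. k m v)))"
    using step1 step2 step3 by simp
  also have "\<dots> = (\<Sum>p\<in>P2. \<Sum>m\<in>Poly_Mapping.keys P. Poly_Mapping.lookup P m * g m p)
       + (\<Sum>v\<in>V. \<Sum>m\<in>Poly_Mapping.keys P. Poly_Mapping.lookup P m * k m v)"
    by (simp add: distrib_left sum.distrib sum_distrib_left sum.swap[of _ P2] sum.swap[of _ V])
  also have "(\<Sum>p\<in>P2. \<Sum>m\<in>Poly_Mapping.keys P. Poly_Mapping.lookup P m * g m p)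
     = (\<Sum>(u, v)\<in>P2. coeff_at V P (\<lambda>w. f w + ind1 u w + ind1 v w) * (\<Sum>(L u) * \<Sum>(L v)))"
  proof (rule sum.cong)
    fix p assume "p \<in> P2"
    obtain u v where p: "p = (u, v)" by (cases p)
    have "(\<Sum>m\<in>Poly_Mapping.keys P. Poly_Mapping.lookup P m * g m p)
       = (\<Sum>m\<in>Poly_Mapping.keys P. (if (\<forall>w\<in>V. int (Poly_Mapping.lookup m w) = f w + ind1 u w + ind1 v w) then Poly_Mapping.lookup P m else 0))
         * (\<Sum>(L u) * \<Sum>(L v))"
      unfolding sum_distrib_right[where A="Poly_Mapping.keys P"] by (rule sum.cong) (auto simp: g_def p)
    also have "\<dots> = coeff_at V P (\<lambda>w. f w + ind1 u w + ind1 v w) * (\<Sum>(L u) * \<Sum>(L v))"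
      using coef_lemma[OF fV keysV] by simp
    finally show "(\<Sum>m\<in>Poly_Mapping.keys P. Poly_Mapping.lookup P m * g m p)
      = (case p of (u, v) \<Rightarrow> coeff_at V P (\<lambda>w. f w + ind1 u w + ind1 v w) * (\<Sum>(L u) * \<Sum>(L v)))"
      using p by simp
  qed simp
  also have "(\<Sum>v\<in>V. \<Sum>m\<in>Poly_Mapping.keys P. Poly_Mapping.lookup P m * k m v)
     = (\<Sum>v\<in>V. coeff_at V P (\<lambda>w. f w + 2 * ind1 v w) * h2 (L v))"
  proof (rule sum.cong)
    fix v assume "v \<in> V"
    have "(\<Sum>m\<in>Poly_Mapping.keys P. Poly_Mapping.lookup P m * k m v)
       = (\<Sum>m\<in>Poly_Mapping.keys P. (if (\<forall>w\<in>V. int (Poly_Mapping.lookup m w) = f w + 2 * ind1 v w) then Poly_Mapping.lookup P m else 0))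
         * h2 (L v)"
      unfolding sum_distrib_right by (rule sum.cong) (auto simp: k_def)
    also have "\<dots> = coeff_at V P (\<lambda>w. f w + 2 * ind1 v w) * h2 (L v)"
      using coef_lemma[OF fV keysV] by simp
    finally show "(\<Sum>m\<in>Poly_Mapping.keys P. Poly_Mapping.lookup P m * k m v)
       = coeff_at V P (\<lambda>w. f w + 2 * ind1 v w) * h2 (L v)" .
  qed simp
  finally show ?thesis unfolding P_def P2_def by simp
qed

lemma quad_zero:
  fixes A B C :: real
  assumes fin: "finite F" and H: "\<forall>l. l \<notin> F \<longrightarrow> A * l ^ 2 + B * l + C = 0"
  shows "A = 0"
proof -
  have inf: "\<not> finite (UNIV :: real set)" by (rule infinite_UNIV_char_0)
  obtain l1 where l1: "l1 \<notin> F" using ex_new_if_finite[OF inf fin] by blast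
  obtain l2 where l2: "l2 \<notin> insert l1 F" using ex_new_if_finite[OF inf, of "insert l1 F"] fin by blast
  obtain l3 where l3: "l3 \<notin> insert l2 (insert l1 F)" using ex_new_if_finite[OF inf, of "insert l2 (insert l1 F)"] fin by blast
  have e1: "A * l1 ^ 2 + B * l1 + C = 0" using H l1 by blast
  have e2: "A * l2 ^ 2 + B * l2 + C = 0" using H l2 by blast
  have e3: "A * l3 ^ 2 + B * l3 + C = 0" using H l3 by blast
  have "(l1 - l2) * (A * (l1 + l2) + B) = (A * l1 ^ 2 + B * l1 + C) - (A * l2 ^ 2 + B * l2 + C)"
    by (simp add: algebra_simps power2_eq_square)
  then have "(l1 - l2) * (A * (l1 + l2) + B) = 0" using e1 e2 by simp
  then have d1: "A * (l1 + l2) + B = 0" using l2 by simp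
  have "(l1 - l3) * (A * (l1 + l3) + B) = (A * l1 ^ 2 + B * l1 + C) - (A * l3 ^ 2 + B * l3 + C)"
    by (simp add: algebra_simps power2_eq_square)
  then have "(l1 - l3) * (A * (l1 + l3) + B) = 0" using e1 e3 by simp
  then have d2: "A * (l1 + l3) + B = 0" using l3 by auto
  have "A * (l2 - l3) = (A * (l1 + l2) + B) - (A * (l1 + l3) + B)" by (simp add: algebra_simps)
  then have "A * (l2 - l3) = 0" using d1 d2 by simp
  then show ?thesis using l3 by auto
qed

lemma notcol_image:
  assumes G: "simple_graph V E" and notcol: "\<not> L_colorable V E L"
  shows "\<not> L_colorable V E (\<lambda>v. \<psi> ` L v)"
proof
  assume "L_colorable V E (\<lambda>v. \<psi> ` L v)"
  then obtain \<phi>' where p1: "\<forall>v\<in>V. \<phi>' v \<in> \<psi> ` L v" and p2: "\<forall>u v. {u, v} \<in> E \<longrightarrow> \<phi>' u \<noteq> \<phi>' v"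
    unfolding L_colorable_def by blast
  define \<phi> where "\<phi> v = (SOME x. x \<in> L v \<and> \<psi> x = \<phi>' v)" for v
  have ph: "\<phi> v \<in> L v \<and> \<psi> (\<phi> v) = \<phi>' v" if "v \<in> V" for v
  proof -
    have "\<exists>x. x \<in> L v \<and> \<psi> x = \<phi>' v" using p1 that by force
    then show ?thesis unfolding \<phi>_def by (rule someI_ex)
  qed
  have "L_colorable V E L"
    unfolding L_colorable_def
  proof (intro exI conjI allI impI ballI)
    fix v assume "v \<in> V" then show "\<phi> v \<in> L v" using ph by blast
  next
    fix u v assume uv: "{u, v} \<in> E"
    then have "u \<in> V" "v \<in> V" using G by (auto simp: simple_graph_def)
    then show "\<phi> u \<noteq> \<phi> v" using ph p2 uv by metis
  qed
  then show False using notcol by blast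
qed

lemma key_lemma:
  fixes V :: "'v::linorder set" and E :: "'v set set"
    and L :: "'v \<Rightarrow> real set" and f :: "'v \<Rightarrow> int" and \<omega> :: "real \<Rightarrow> real"
  assumes G: "simple_graph V E"
    and Lfin: "\<forall>v\<in>V. finite (L v)"
    and f_lt: "\<forall>v\<in>V. f v < int (card (L v))"
    and f_sum: "(\<Sum>v\<in>V. f v) = int (card E) - 2"
    and notcol: "\<not> L_colorable V E L"
  shows "(\<Sum>p\<in>{(u, v). u \<in> V \<and> v \<in> V \<and> u < v}.
            coeff_at V (graph_poly E) (\<lambda>w. f w + ind1 (fst p) w + ind1 (snd p) w)
              * ((\<Sum>x\<in>L (fst p). \<omega> x) * (\<Sum>x\<in>L (snd p). \<omega> x)))
       + (\<Sum>v\<in>V. coeff_at V (graph_poly E) (\<lambda>w. f w + 2 * ind1 v w)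
              * (((\<Sum>x\<in>L v. \<omega> x) ^ 2 + (\<Sum>x\<in>L v. (\<omega> x) ^ 2)) / 2)) = 0"
proof -
  define P2 where "P2 = {(u, v). u \<in> V \<and> v \<in> V \<and> u < v}"
  define cp where "cp p = coeff_at V (graph_poly E) (\<lambda>w. f w + ind1 (fst p) w + ind1 (snd p) w)" for p
  define cs where "cs v = coeff_at V (graph_poly E) (\<lambda>w. f w + 2 * ind1 v w)" for v
  define Om where "Om v = (\<Sum>x\<in>L v. \<omega> x)" for v
  define Wq where "Wq v = (\<Sum>x\<in>L v. (\<omega> x) ^ 2)" for v
  define S where "S v = (\<Sum>x\<in>L v. x)" for v
  define Q where "Q v = (\<Sum>x\<in>L v. x ^ 2)" for v
  define R where "R v = (\<Sum>x\<in>L v. x * \<omega> x)" for v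
  define K where "K = (\<Union>v\<in>V. L v)"
  have fV: "finite V" using G by (simp add: simple_graph_def)
  have fK: "finite K" unfolding K_def using fV Lfin by blast
  define Bad where "Bad = (\<lambda>(x, y). (y - x) / (\<omega> x - \<omega> y)) ` (K \<times> K)"
  have fBad: "finite Bad" unfolding Bad_def using fK by blast
  define A where "A = (\<Sum>p\<in>P2. cp p * (Om (fst p) * Om (snd p))) + (\<Sum>v\<in>V. cs v * ((Om v ^ 2 + Wq v) / 2))"
  define B where "B = (\<Sum>p\<in>P2. cp p * (S (fst p) * Om (snd p) + Om (fst p) * S (snd p)))
       + (\<Sum>v\<in>V. cs v * (S v * Om v + R v))"
  define C where "C = (\<Sum>p\<in>P2. cp p * (S (fst p) * S (snd p))) + (\<Sum>v\<in>V. cs v * ((S v ^ 2 + Q v) / 2))"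
  have "\<forall>l. l \<notin> Bad \<longrightarrow> A * l ^ 2 + B * l + C = 0"
  proof (intro allI impI)
    fix l assume lB: "l \<notin> Bad"
    define \<psi> where "\<psi> x = x + l * \<omega> x" for x
    have injK: "inj_on \<psi> K"
    proof (rule inj_onI)
      fix x y assume xy: "x \<in> K" "y \<in> K" "\<psi> x = \<psi> y"
      show "x = y"
      proof (rule ccontr)
        assume ne: "x \<noteq> y"
        have eq: "l * (\<omega> x - \<omega> y) = y - x" using xy(3) unfolding \<psi>_def by (simp add: algebra_simps)
        then have "\<omega> x - \<omega> y \<noteq> 0" using ne by auto
        then have "l = (y - x) / (\<omega> x - \<omega> y)" using eq by (simp add: field_simps)
        then have "l \<in> Bad" unfolding Bad_def using xy by force
        then show False using lB by simp
      qed
    qed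
    have injv: "inj_on \<psi> (L v)" if "v \<in> V" for v
      using inj_on_subset[OF injK] that unfolding K_def by blast
    define L' where "L' v = \<psi> ` L v" for v
    have Lfin': "\<forall>v\<in>V. finite (L' v)" using Lfin by (simp add: L'_def)
    have card': "card (L' v) = card (L v)" if "v \<in> V" for v
      unfolding L'_def using injv[OF that] by (rule card_image)
    have f_lt': "\<forall>v\<in>V. f v < int (card (L' v))" using f_lt card' by simp
    have notcol': "\<not> L_colorable V E L'" unfolding L'_def by (rule notcol_image[OF G notcol])
    have MI: "(\<Sum>(u, v)\<in>{(u, v). u \<in> V \<and> v \<in> V \<and> u < v}.
              coeff_at V (graph_poly E) (\<lambda>w. f w + ind1 u w + ind1 v w) * (\<Sum>(L' u) * \<Sum>(L' v)))
          + (\<Sum>v\<in>V. coeff_at V (graph_poly E) (\<lambda>w. f w + 2 * ind1 v w) * h2 (L' v)) = 0"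
      by (rule main_identity[OF G Lfin' f_lt' f_sum notcol'])
    have sumL': "\<Sum>(L' v) = S v + l * Om v" if "v \<in> V" for v
    proof -
      have "\<Sum>(L' v) = (\<Sum>x\<in>L v. \<psi> x)" unfolding L'_def using injv[OF that] by (simp add: sum.reindex)
      also have "\<dots> = S v + l * Om v" unfolding \<psi>_def S_def Om_def by (simp add: sum.distrib sum_distrib_left)
      finally show ?thesis .
    qed
    have h2L': "h2 (L' v) = ((S v + l * Om v) ^ 2 + (Q v + 2 * l * R v + l ^ 2 * Wq v)) / 2" if "v \<in> V" for v
    proof -
      have "(\<Sum>x\<in>L' v. x ^ 2) = (\<Sum>x\<in>L v. (\<psi> x) ^ 2)" unfolding L'_def using injv[OF that] by (simp add: sum.reindex)
      also have "\<dots> = (\<Sum>x\<in>L v. x ^ 2 + 2 * l * (x * \<omega> x) + l ^ 2 * (\<omega> x) ^ 2)"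
        unfolding \<psi>_def by (rule sum.cong) (simp_all add: power2_eq_square algebra_simps)
      also have "\<dots> = Q v + 2 * l * R v + l ^ 2 * Wq v"
        unfolding Q_def R_def Wq_def by (simp add: sum.distrib sum_distrib_left)
      finally show ?thesis unfolding h2_def using sumL'[OF that] by simp
    qed
    have MI': "(\<Sum>p\<in>P2. cp p * ((S (fst p) + l * Om (fst p)) * (S (snd p) + l * Om (snd p))))
        + (\<Sum>v\<in>V. cs v * (((S v + l * Om v) ^ 2 + (Q v + 2 * l * R v + l ^ 2 * Wq v)) / 2)) = 0"
    proof -
      have 1: "(\<Sum>(u, v)\<in>{(u, v). u \<in> V \<and> v \<in> V \<and> u < v}.
              coeff_at V (graph_poly E) (\<lambda>w. f w + ind1 u w + ind1 v w) * (\<Sum>(L' u) * \<Sum>(L' v)))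
          = (\<Sum>p\<in>P2. cp p * ((S (fst p) + l * Om (fst p)) * (S (snd p) + l * Om (snd p))))"
        unfolding P2_def cp_def by (rule sum.cong) (auto simp: sumL')
      have 2: "(\<Sum>v\<in>V. coeff_at V (graph_poly E) (\<lambda>w. f w + 2 * ind1 v w) * h2 (L' v))
          = (\<Sum>v\<in>V. cs v * (((S v + l * Om v) ^ 2 + (Q v + 2 * l * R v + l ^ 2 * Wq v)) / 2))"
        unfolding cs_def by (rule sum.cong) (auto simp: h2L')
      show ?thesis using MI 1 2 by simp
    qed
    have T1: "(\<Sum>p\<in>P2. cp p * ((S (fst p) + l * Om (fst p)) * (S (snd p) + l * Om (snd p))))
       = l ^ 2 * (\<Sum>p\<in>P2. cp p * (Om (fst p) * Om (snd p)))
         + l * (\<Sum>p\<in>P2. cp p * (S (fst p) * Om (snd p) + Om (fst p) * S (snd p)))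
         + (\<Sum>p\<in>P2. cp p * (S (fst p) * S (snd p)))"
    proof -
      have "(\<Sum>p\<in>P2. cp p * ((S (fst p) + l * Om (fst p)) * (S (snd p) + l * Om (snd p))))
        = (\<Sum>p\<in>P2. l ^ 2 * (cp p * (Om (fst p) * Om (snd p)))
              + l * (cp p * (S (fst p) * Om (snd p) + Om (fst p) * S (snd p)))
              + cp p * (S (fst p) * S (snd p)))"
        by (rule sum.cong) (simp_all add: power2_eq_square algebra_simps)
      then show ?thesis by (simp add: sum.distrib sum_distrib_left)
    qed
    have T2: "(\<Sum>v\<in>V. cs v * (((S v + l * Om v) ^ 2 + (Q v + 2 * l * R v + l ^ 2 * Wq v)) / 2))
       = l ^ 2 * (\<Sum>v\<in>V. cs v * ((Om v ^ 2 + Wq v) / 2))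
         + l * (\<Sum>v\<in>V. cs v * (S v * Om v + R v))
         + (\<Sum>v\<in>V. cs v * ((S v ^ 2 + Q v) / 2))"
    proof -
      have "(\<Sum>v\<in>V. cs v * (((S v + l * Om v) ^ 2 + (Q v + 2 * l * R v + l ^ 2 * Wq v)) / 2))
        = (\<Sum>v\<in>V. l ^ 2 * (cs v * ((Om v ^ 2 + Wq v) / 2))
              + l * (cs v * (S v * Om v + R v))
              + cs v * ((S v ^ 2 + Q v) / 2))"
        by (rule sum.cong) (simp_all add: power2_eq_square field_simps)
      then show ?thesis by (simp add: sum.distrib sum_distrib_left)
    qed
    show "A * l ^ 2 + B * l + C = 0"
      using MI' T1 T2 unfolding A_def B_def C_def by (simp add: algebra_simps)
  qed
  then have "A = 0" by (rule quad_zero[OF fBad])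
  then show ?thesis unfolding A_def P2_def cp_def cs_def Om_def Wq_def .
qed

lemma sum_delta_chi:
  assumes "finite A"
  shows "(\<Sum>x\<in>A. if x = c then (1::real) else 0) = chi (\<lambda>_. A) c v"
  using assms by (simp add: chi_def)

lemma part1:
  fixes V :: "'v::linorder set" and E :: "'v set set"
    and L :: "'v \<Rightarrow> real set" and f :: "'v \<Rightarrow> int"
  assumes G: "simple_graph V E"
    and Lfin: "\<forall>v\<in>V. finite (L v)"
    and f_lt: "\<forall>v\<in>V. f v < int (card (L v))"
    and f_sum: "(\<Sum>v\<in>V. f v) = int (card E) - 2"
    and notcol: "\<not> L_colorable V E L"
  shows "(\<Sum>(u, v)\<in>{(u, v). u \<in> V \<and> v \<in> V \<and> u < v}.
              coeff_at V (graph_poly E) (\<lambda>w. f w + ind1 u w + ind1 v w) * (chi L c u * chi L c v))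
          + (\<Sum>v\<in>V. coeff_at V (graph_poly E) (\<lambda>w. f w + 2 * ind1 v w) * chi L c v) = 0"
proof -
  define \<omega> where "\<omega> x = (if x = c then (1::real) else 0)" for x
  have Om: "(\<Sum>x\<in>L v. \<omega> x) = chi L c v" if "v \<in> V" for v
    using Lfin that by (simp add: \<omega>_def chi_def)
  have Wq: "(\<Sum>x\<in>L v. (\<omega> x) ^ 2) = chi L c v" if "v \<in> V" for v
  proof -
    have "(\<Sum>x\<in>L v. (\<omega> x) ^ 2) = (\<Sum>x\<in>L v. \<omega> x)" by (rule sum.cong) (auto simp: \<omega>_def)
    then show ?thesis using Om that by simp
  qed
  have half: "(chi L c v ^ 2 + chi L c v) / 2 = chi L c v" for v by (simp add: chi_def)
  have K: "(\<Sum>p\<in>{(u, v). u \<in> V \<and> v \<in> V \<and> u < v}.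
            coeff_at V (graph_poly E) (\<lambda>w. f w + ind1 (fst p) w + ind1 (snd p) w)
              * ((\<Sum>x\<in>L (fst p). \<omega> x) * (\<Sum>x\<in>L (snd p). \<omega> x)))
       + (\<Sum>v\<in>V. coeff_at V (graph_poly E) (\<lambda>w. f w + 2 * ind1 v w)
              * (((\<Sum>x\<in>L v. \<omega> x) ^ 2 + (\<Sum>x\<in>L v. (\<omega> x) ^ 2)) / 2)) = 0"
    by (rule key_lemma[OF G Lfin f_lt f_sum notcol])
  have 1: "(\<Sum>p\<in>{(u, v). u \<in> V \<and> v \<in> V \<and> u < v}.
            coeff_at V (graph_poly E) (\<lambda>w. f w + ind1 (fst p) w + ind1 (snd p) w)
              * ((\<Sum>x\<in>L (fst p). \<omega> x) * (\<Sum>x\<in>L (snd p). \<omega> x)))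
     = (\<Sum>p\<in>{(u, v). u \<in> V \<and> v \<in> V \<and> u < v}.
              coeff_at V (graph_poly E) (\<lambda>w. f w + ind1 (fst p) w + ind1 (snd p) w) * (chi L c (fst p) * chi L c (snd p)))"
    by (rule sum.cong) (auto simp: Om)
  have 2: "(\<Sum>v\<in>V. coeff_at V (graph_poly E) (\<lambda>w. f w + 2 * ind1 v w)
              * (((\<Sum>x\<in>L v. \<omega> x) ^ 2 + (\<Sum>x\<in>L v. (\<omega> x) ^ 2)) / 2))
     = (\<Sum>v\<in>V. coeff_at V (graph_poly E) (\<lambda>w. f w + 2 * ind1 v w) * chi L c v)"
    by (rule sum.cong) (auto simp: Om Wq half)
  show ?thesis using K unfolding 1 2 by (simp only: case_prod_unfold)
qed

lemma part2:
  fixes V :: "'v::linorder set" and E :: "'v set set"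
    and L :: "'v \<Rightarrow> real set" and f :: "'v \<Rightarrow> int"
  assumes G: "simple_graph V E"
    and Lfin: "\<forall>v\<in>V. finite (L v)"
    and f_lt: "\<forall>v\<in>V. f v < int (card (L v))"
    and f_sum: "(\<Sum>v\<in>V. f v) = int (card E) - 2"
    and notcol: "\<not> L_colorable V E L"
    and ne: "c1 \<noteq> c2"
  shows "(\<Sum>(u, v)\<in>{(u, v). u \<in> V \<and> v \<in> V \<and> u < v}.
              coeff_at V (graph_poly E) (\<lambda>w. f w + ind1 u w + ind1 v w)
                * (chi L c1 u * chi L c2 v + chi L c2 u * chi L c1 v))
          + (\<Sum>v\<in>V. coeff_at V (graph_poly E) (\<lambda>w. f w + 2 * ind1 v w) * (chi L c1 v * chi L c2 v)) = 0"
proof -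
  define P2 where "P2 = {(u, v). u \<in> V \<and> v \<in> V \<and> u < v}"
  define cp where "cp p = coeff_at V (graph_poly E) (\<lambda>w. f w + ind1 (fst p) w + ind1 (snd p) w)" for p
  define cs where "cs v = coeff_at V (graph_poly E) (\<lambda>w. f w + 2 * ind1 v w)" for v
  define \<omega> where "\<omega> x = (if x = c1 then (1::real) else 0) + (if x = c2 then 1 else 0)" for x
  have Om: "(\<Sum>x\<in>L v. \<omega> x) = chi L c1 v + chi L c2 v" if "v \<in> V" for v
    using Lfin that by (simp add: \<omega>_def chi_def sum.distrib)
  have Wq: "(\<Sum>x\<in>L v. (\<omega> x) ^ 2) = chi L c1 v + chi L c2 v" if "v \<in> V" for v
  proof -
    have "(\<Sum>x\<in>L v. (\<omega> x) ^ 2) = (\<Sum>x\<in>L v. \<omega> x)" by (rule sum.cong) (use ne in \<open>auto simp: \<omega>_def\<close>)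
    then show ?thesis using Om that by simp
  qed
  have K: "(\<Sum>p\<in>P2. cp p * ((\<Sum>x\<in>L (fst p). \<omega> x) * (\<Sum>x\<in>L (snd p). \<omega> x)))
       + (\<Sum>v\<in>V. cs v * (((\<Sum>x\<in>L v. \<omega> x) ^ 2 + (\<Sum>x\<in>L v. (\<omega> x) ^ 2)) / 2)) = 0"
    unfolding P2_def cp_def cs_def by (rule key_lemma[OF G Lfin f_lt f_sum notcol])
  have A1: "(\<Sum>p\<in>P2. cp p * (chi L c1 (fst p) * chi L c1 (snd p))) + (\<Sum>v\<in>V. cs v * chi L c1 v) = 0"
    using part1[OF G Lfin f_lt f_sum notcol, of c1] unfolding P2_def cp_def cs_def case_prod_unfold .
  have A2: "(\<Sum>p\<in>P2. cp p * (chi L c2 (fst p) * chi L c2 (snd p))) + (\<Sum>v\<in>V. cs v * chi L c2 v) = 0"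
    using part1[OF G Lfin f_lt f_sum notcol, of c2] unfolding P2_def cp_def cs_def case_prod_unfold .
  have 1: "(\<Sum>p\<in>P2. cp p * ((\<Sum>x\<in>L (fst p). \<omega> x) * (\<Sum>x\<in>L (snd p). \<omega> x)))
     = (\<Sum>p\<in>P2. cp p * (chi L c1 (fst p) * chi L c1 (snd p)))
       + (\<Sum>p\<in>P2. cp p * (chi L c2 (fst p) * chi L c2 (snd p)))
       + (\<Sum>p\<in>P2. cp p * (chi L c1 (fst p) * chi L c2 (snd p) + chi L c2 (fst p) * chi L c1 (snd p)))"
  proof -
    have "(\<Sum>p\<in>P2. cp p * ((\<Sum>x\<in>L (fst p). \<omega> x) * (\<Sum>x\<in>L (snd p). \<omega> x)))
       = (\<Sum>p\<in>P2. cp p * (chi L c1 (fst p) * chi L c1 (snd p))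
       + cp p * (chi L c2 (fst p) * chi L c2 (snd p))
       + cp p * (chi L c1 (fst p) * chi L c2 (snd p) + chi L c2 (fst p) * chi L c1 (snd p)))"
      by (rule sum.cong) (auto simp: P2_def Om algebra_simps)
    then show ?thesis by (simp add: sum.distrib)
  qed
  have 2: "(\<Sum>v\<in>V. cs v * (((\<Sum>x\<in>L v. \<omega> x) ^ 2 + (\<Sum>x\<in>L v. (\<omega> x) ^ 2)) / 2))
     = (\<Sum>v\<in>V. cs v * chi L c1 v) + (\<Sum>v\<in>V. cs v * chi L c2 v) + (\<Sum>v\<in>V. cs v * (chi L c1 v * chi L c2 v))"
  proof -
    have "(\<Sum>v\<in>V. cs v * (((\<Sum>x\<in>L v. \<omega> x) ^ 2 + (\<Sum>x\<in>L v. (\<omega> x) ^ 2)) / 2))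
      = (\<Sum>v\<in>V. cs v * chi L c1 v + cs v * chi L c2 v + cs v * (chi L c1 v * chi L c2 v))"
      by (rule sum.cong) (auto simp: Om Wq chi_def)
    then show ?thesis by (simp add: sum.distrib)
  qed
  have "(\<Sum>p\<in>P2. cp p * (chi L c1 (fst p) * chi L c2 (snd p) + chi L c2 (fst p) * chi L c1 (snd p)))
     + (\<Sum>v\<in>V. cs v * (chi L c1 v * chi L c2 v)) = 0"
    using K A1 A2 unfolding 1 2 by linarith
  then show ?thesis unfolding P2_def cp_def cs_def case_prod_unfold .
qed

theorem theorem17:
  fixes V :: "'v::linorder set" and E :: "'v set set"
    and L :: "'v \<Rightarrow> real set" and f :: "'v \<Rightarrow> int"
  assumes G: "simple_graph V E"
    and Lfin: "\<forall>v\<in>V. finite (L v)"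
    and f_lt: "\<forall>v\<in>V. f v < int (card (L v))"
    and f_sum: "(\<Sum>v\<in>V. f v) = int (card E) - 2"
    and notcol: "\<not> L_colorable V E L"
  shows "(\<forall>c. (\<Sum>(u, v)\<in>{(u, v). u \<in> V \<and> v \<in> V \<and> u < v}.
              coeff_at V (graph_poly E) (\<lambda>w. f w + ind1 u w + ind1 v w) * (chi L c u * chi L c v))
          + (\<Sum>v\<in>V. coeff_at V (graph_poly E) (\<lambda>w. f w + 2 * ind1 v w) * chi L c v) = 0)
   \<and> (\<forall>c1 c2. c1 \<noteq> c2 \<longrightarrow>
          (\<Sum>(u, v)\<in>{(u, v). u \<in> V \<and> v \<in> V \<and> u < v}.
              coeff_at V (graph_poly E) (\<lambda>w. f w + ind1 u w + ind1 v w)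
                * (chi L c1 u * chi L c2 v + chi L c2 u * chi L c1 v))
          + (\<Sum>v\<in>V. coeff_at V (graph_poly E) (\<lambda>w. f w + 2 * ind1 v w) * (chi L c1 v * chi L c2 v)) = 0)"
  using part1[OF G Lfin f_lt f_sum notcol] part2[OF G Lfin f_lt f_sum notcol] by blast

end
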